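(* Let $n\in\{2,3\}$ and $\Lambda>-1$. There is a constant $C$ (depending only on $n,\Lambda$) such that for any $t\ge 2$ and any sufficiently smooth function $w$ defined on $\Sigma^{\rm{ex}}_t=\{x\in\mathbb{R}^n:|x|\ge t-1\}$ (as a slice of a function of $(t,x)$), $$\int_{\Sigma^{\rm{ex}}_t}(2+r-t)^\Lambda|Z_kw|^2{\rm{d}}x\le C\sum_{|J|\le 1}\int_{\Sigma^{\rm{ex}}_t}(2+r-t)^{\Lambda+2}|\partial Z^{J}w|^2{\rm{d}}x,\quad k\in\{1,\dots,n_2\},$$ $$\int_{\Sigma^{\rm{ex}}_t}(2+r-t)^\Lambda|L_0w|^2{\rm{d}}x\le C\sum_{|J|\le 1}\int_{\Sigma^{\rm{ex}}_t}(2+r-t)^{\Lambda+2}|\partial Z^Jw|^2{\rm{d}}x.$$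
   Context: $r=|x|$. Lorentz boosts $L_a=x_a\partial_t+t\partial_a$ ($1\le a\le n$), rotations $\Omega_{ab}=x_a\partial_b-x_b\partial_a$ ($1\le a<b\le n$), scaling $L_0=t\partial_t+x^a\partial_a$. $n_2=(n^2+n)/2$ and $\{Z_k\}_{k=1}^{n_2}=\{(L_a)_{1\le a\le n},(\Omega_{ab})_{1\le a<b\le n}\}$; for $J=(j_1,\dots,j_{n_2})$, $Z^J=\prod_k Z_k^{j_k}$, $|J|=\sum j_k$. $|\partial u|=(|\partial_tu|^2+\sum_a|\partial_au|^2)^{1/2}$. *)

theory Defs
  imports "HOL-Analysis.Analysis"
begin

type_synonym 'n stfun = "real \<times> (real^'n) \<Rightarrow> real"

definition pd :: "'n::finite stfun \<Rightarrow> real \<times> (real^'n) \<Rightarrow> real \<times> (real^'n) \<Rightarrow> real" where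
  "pd w v p = frechet_derivative w (at p) v"

definition dt :: "'n::finite stfun \<Rightarrow> 'n stfun" where
  "dt w = pd w (1, 0)"

definition dx :: "'n::finite \<Rightarrow> 'n stfun \<Rightarrow> 'n stfun" where
  "dx a w = pd w (0, axis a 1)"

definition C2 :: "'n::finite stfun \<Rightarrow> bool" where
  "C2 w \<longleftrightarrow> (\<forall>p. w differentiable at p)
     \<and> (\<forall>v p. pd w v differentiable at p)
     \<and> (\<forall>v u. continuous_on UNIV (pd (pd w v) u))"

definition Lb :: "'n::finite \<Rightarrow> 'n stfun \<Rightarrow> 'n stfun" where
  "Lb a w = (\<lambda>(s, x). x $ a * dt w (s, x) + s * dx a w (s, x))"

definition Om :: "'n::finite \<Rightarrow> 'n \<Rightarrow> 'n stfun \<Rightarrow> 'n stfun" where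
  "Om a b w = (\<lambda>(s, x). x $ a * dx b w (s, x) - x $ b * dx a w (s, x))"

definition L0 :: "'n::finite stfun \<Rightarrow> 'n stfun" where
  "L0 w = (\<lambda>(s, x). s * dt w (s, x) + (\<Sum>a\<in>UNIV. x $ a * dx a w (s, x)))"

definition gradsq :: "'n::finite stfun \<Rightarrow> 'n stfun" where
  "gradsq w p = (dt w p)\<^sup>2 + (\<Sum>a\<in>UNIV. (dx a w p)\<^sup>2)"

text \<open>sum over |J| \<le> 1 of |\<partial> Z^J w|^2 : J = 0, the n boosts, and the rotations with a < b.\<close>
definition gradZsq :: "('n::{finite,linorder}) stfun \<Rightarrow> 'n stfun" where
  "gradZsq w p = gradsq w p + (\<Sum>a\<in>UNIV. gradsq (Lb a w) p)
      + (\<Sum>(a, b)\<in>{(a, b). a < b}. gradsq (Om a b w) p)"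

definition Sigma_ex :: "real \<Rightarrow> (real^'n::finite) set" where
  "Sigma_ex t = {x. norm x \<ge> t - 1}"

definition wint :: "real \<Rightarrow> real \<Rightarrow> ('n::finite stfun) \<Rightarrow> ennreal" where
  "wint \<Lambda> t f = (\<integral>\<^sup>+ x \<in> Sigma_ex t. ennreal ((2 + norm x - t) powr \<Lambda> * f (t, x)) \<partial>lborel)"

end

theory Submission
  imports Defs
begin

lemma scale_nn_int:
  fixes f :: "'a::euclidean_space \<Rightarrow> ennreal"
  assumes [measurable]: "f \<in> borel_measurable borel" and c: "c \<noteq> 0"
  shows "(\<integral>\<^sup>+x. f x \<partial>lborel) = ennreal (\<bar>c\<bar>^DIM('a)) * (\<integral>\<^sup>+x. f (c *\<^sub>R x) \<partial>lborel)"
  by (subst lborel_affine[OF c, of 0])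
     (simp add: nn_integral_density nn_integral_distr nn_integral_cmult)

lemma ln2_int:
  assumes c: "(c::real) > 0"
  shows "(\<integral>\<^sup>+s. ennreal (1/s) * indicator {c/2..c} s \<partial>lborel) = ennreal (ln 2)"
proof -
  have "((\<lambda>s. 1/s) has_integral (ln c - ln (c/2))) {c/2..c}"
  proof (rule fundamental_theorem_of_calculus)
    show "c/2 \<le> c" using c by simp
    fix x assume "x \<in> {c/2..c}"
    then have "x > 0" using c by auto
    then show "(ln has_vector_derivative 1/x) (at x within {c/2..c})"
      by (auto intro!: derivative_eq_intros simp: has_real_derivative_iff_has_vector_derivative[symmetric])
  qed
  moreover have "ln c - ln (c/2) = ln 2" using c by (simp add: ln_div)
  ultimately have "((\<lambda>s. 1/s) has_integral ln 2) {c/2..c}" by simp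
  then show ?thesis
    using nn_integral_has_integral_lebesgue'[of "{c/2..c}" "\<lambda>s. 1/s" "ln 2"] c by auto
qed

lemma ray_identity:
  fixes h :: "'a::euclidean_space \<Rightarrow> ennreal"
  assumes [measurable]: "h \<in> borel_measurable borel"
  shows "(\<integral>\<^sup>+y. indicator {y. 1 \<le> norm y \<and> norm y \<le> 2} y *
      (\<integral>\<^sup>+s. indicator {0<..} s * ennreal (s^(DIM('a)-1)) * h (s *\<^sub>R y) \<partial>lborel) \<partial>lborel)
    = ennreal (ln 2) * (\<integral>\<^sup>+x. h x \<partial>lborel)"
proof -
  define n where "n = DIM('a)"
  have n1: "n \<ge> 1" unfolding n_def by (simp add: DIM_positive Suc_leI)
  let ?A = "{y::'a. 1 \<le> norm y \<and> norm y \<le> 2}"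
  have "(\<integral>\<^sup>+y. indicator ?A y *
      (\<integral>\<^sup>+s. indicator {0<..} s * ennreal (s^(DIM('a)-1)) * h (s *\<^sub>R y) \<partial>lborel) \<partial>lborel)
    = (\<integral>\<^sup>+y. (\<integral>\<^sup>+s. indicator ?A y * (indicator {0<..} s * ennreal (s^(n-1)) * h (s *\<^sub>R y)) \<partial>lborel) \<partial>lborel)"
    unfolding n_def by (intro nn_integral_cong, subst nn_integral_cmult) auto
  also have "\<dots> = (\<integral>\<^sup>+s. (\<integral>\<^sup>+y. indicator ?A y * (indicator {0<..} s * ennreal (s^(n-1)) * h (s *\<^sub>R y)) \<partial>lborel) \<partial>lborel)"
    by (subst lborel_pair.Fubini') (auto simp: case_prod_unfold)
  also have "\<dots> = (\<integral>\<^sup>+s. (\<integral>\<^sup>+x. indicator {0<..} s * ennreal (1/s) * (indicator {z. s \<le> norm z \<and> norm z \<le> 2 * s} x * h x) \<partial>lborel) \<partial>lborel)"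
  proof (rule nn_integral_cong)
    fix s :: real
    show "(\<integral>\<^sup>+y. indicator ?A y * (indicator {0<..} s * ennreal (s^(n-1)) * h (s *\<^sub>R y)) \<partial>lborel)
      = (\<integral>\<^sup>+x. indicator {0<..} s * ennreal (1/s) * (indicator {z. s \<le> norm z \<and> norm z \<le> 2 * s} x * h x) \<partial>lborel)"
    proof (cases "s > 0")
      case False then show ?thesis by simp
    next
      case True
      let ?f = "\<lambda>x::'a. indicator {z. s \<le> norm z \<and> norm z \<le> 2 * s} x * h x"
      have sc: "(\<integral>\<^sup>+x. ?f x \<partial>lborel) = ennreal (s^n) * (\<integral>\<^sup>+y. ?f (s *\<^sub>R y) \<partial>lborel)"
        using scale_nn_int[of ?f s] True unfolding n_def by simp
      have fe: "?f (s *\<^sub>R y) = indicator ?A y * h (s *\<^sub>R y)" for y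
        using True by (auto simp: indicator_def)
      have "(\<integral>\<^sup>+y. indicator ?A y * (indicator {0<..} s * ennreal (s^(n-1)) * h (s *\<^sub>R y)) \<partial>lborel)
         = ennreal (s^(n-1)) * (\<integral>\<^sup>+y. ?f (s *\<^sub>R y) \<partial>lborel)"
        unfolding fe using True
        by (subst nn_integral_cmult[symmetric]) (auto intro!: nn_integral_cong simp: mult_ac)
      also have "\<dots> = ennreal (1/s) * (ennreal (s^n) * (\<integral>\<^sup>+y. ?f (s *\<^sub>R y) \<partial>lborel))"
      proof -
        have "s^n = s * s^(n-1)" using n1 by (metis Suc_diff_le diff_Suc_1 power_Suc)
        then have "(1/s) * s^n = s^(n-1)" using True by simp
        then show ?thesis using True
          by (simp add: mult.assoc[symmetric] ennreal_mult[symmetric])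
      qed
      also have "\<dots> = (\<integral>\<^sup>+x. indicator {0<..} s * ennreal (1/s) * ?f x \<partial>lborel)"
        using True sc by (subst nn_integral_cmult) auto
      finally show ?thesis .
    qed
  qed
  also have "\<dots> = (\<integral>\<^sup>+x. (\<integral>\<^sup>+s. indicator {0<..} s * ennreal (1/s) * (indicator {z. s \<le> norm z \<and> norm z \<le> 2 * s} x * h x) \<partial>lborel) \<partial>lborel)"
    by (subst lborel_pair.Fubini') (auto simp: case_prod_unfold)
  also have "\<dots> = (\<integral>\<^sup>+x. h x * ennreal (ln 2) \<partial>lborel)"
  proof (intro nn_integral_cong_AE eventually_mono[OF AE_lborel_singleton[of 0]])
    fix x :: 'a assume x: "x \<noteq> 0"
    have "(\<integral>\<^sup>+s. indicator {0<..} s * ennreal (1/s) * (indicator {z. s \<le> norm z \<and> norm z \<le> 2 * s} x * h x) \<partial>lborel)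
      = (\<integral>\<^sup>+s. (ennreal (1/s) * indicator {norm x/2..norm x} s) * h x \<partial>lborel)"
      using x by (intro nn_integral_cong) (auto simp: indicator_def)
    also have "\<dots> = ennreal (ln 2) * h x"
      using x by (subst nn_integral_multc) (auto simp: ln2_int)
    finally show "(\<integral>\<^sup>+s. indicator {0<..} s * ennreal (1/s) * (indicator {z. s \<le> norm z \<and> norm z \<le> 2 * s} x * h x) \<partial>lborel) = h x * ennreal (ln 2)"
      by (simp add: mult.commute)
  qed
  also have "\<dots> = ennreal (ln 2) * (\<integral>\<^sup>+x. h x \<partial>lborel)"
    by (subst nn_integral_multc) (auto simp: mult.commute)
  finally show ?thesis .
qed

lemma amgm_aux:
  fixes W q u v w \<alpha> :: real
  assumes "W \<ge> 0" "q \<ge> 0"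
  shows "\<alpha> * (W * w) * u * v * q \<le> (1/2) * (W * u^2 * q) + (\<alpha>^2/2) * (W * w^2 * v^2 * q)"
proof -
  have "0 \<le> W * q * (u - \<alpha> * w * v)^2" using assms by simp
  then show ?thesis by (simp add: power2_eq_square algebra_simps)
qed

lemma log_int:
  assumes c: "(c::real) > 0" and that: "N \<ge> 0"
  shows "((\<lambda>s. 1/s) has_integral N) {c..c * exp N}"
proof -
  have "((\<lambda>s. 1/s) has_integral (ln (c * exp N) - ln c)) {c..c * exp N}"
  proof (rule fundamental_theorem_of_calculus)
    show "c \<le> c * exp N" using c that by simp
    fix x assume "x \<in> {c..c * exp N}"
    then have "x > 0" using c by auto
    then show "(ln has_vector_derivative 1/x) (at x within {c..c * exp N})"
      by (auto intro!: derivative_eq_intros simp: has_real_derivative_iff_has_vector_derivative[symmetric])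
  qed
  moreover have "ln (c * exp N) - ln c = N" using c by (simp add: ln_mult)
  ultimately show ?thesis by simp
qed

lemma tail_small:
  fixes h :: "real \<Rightarrow> real"
  assumes a: "a > 0" and fin: "(\<integral>\<^sup>+s. ennreal (h s) * indicator {a..} s \<partial>lborel) < \<infinity>"
    and eps: "\<epsilon> > 0"
  shows "\<exists>R\<ge>R0. R * h R \<le> \<epsilon>"
proof (rule ccontr)
  assume "\<not> ?thesis"
  then have big: "\<And>R. R \<ge> R0 \<Longrightarrow> R * h R > \<epsilon>" by force
  define c where "c = max R0 a"
  have c: "c > 0" "c \<ge> a" "c \<ge> R0" using a by (auto simp: c_def)
  define M where "M = enn2real (\<integral>\<^sup>+s. ennreal (h s) * indicator {a..} s \<partial>lborel)"
  have M: "(\<integral>\<^sup>+s. ennreal (h s) * indicator {a..} s \<partial>lborel) = ennreal M" "M \<ge> 0"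
    using fin unfolding M_def by (auto simp: less_top)
  define N where "N = M / \<epsilon> + 1"
  have N: "N \<ge> 0" using M eps by (simp add: N_def)
  have "ennreal (\<epsilon> * N) = (\<integral>\<^sup>+s. ennreal (\<epsilon> * (1/s)) * indicator {c..c * exp N} s \<partial>lborel)"
    using nn_integral_has_integral_lebesgue'[OF _ has_integral_mult_right[OF log_int[OF c(1) N], of \<epsilon>]] eps c
    by (auto simp: divide_simps)
  also have "\<dots> \<le> (\<integral>\<^sup>+s. ennreal (h s) * indicator {a..} s \<partial>lborel)"
  proof (rule nn_integral_mono)
    fix s
    show "ennreal (\<epsilon> * (1/s)) * indicator {c..c * exp N} s \<le> ennreal (h s) * indicator {a..} s"
    proof (cases "s \<in> {c..c * exp N}")
      case True
      then have "s \<ge> R0" "s \<ge> a" "s > 0" using c by auto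
      with big[of s] have "\<epsilon> * (1/s) \<le> h s" by (simp add: field_simps mult.commute)
      then show ?thesis using True \<open>s \<ge> a\<close> by (auto simp: indicator_def ennreal_leI)
    qed simp
  qed
  also have "\<dots> = ennreal M" by (rule M)
  finally have "\<epsilon> * N \<le> M" using M by (simp add: ennreal_le_iff)
  moreover have "\<epsilon> * N = M + \<epsilon>" using eps by (simp add: N_def field_simps)
  ultimately show False using eps by simp
qed

lemma hardy_step:
  fixes f f' G :: "real \<Rightarrow> real" and k :: nat and m a \<Lambda> R :: real
  assumes m: "m > 0" and a: "a > 0" and L: "\<Lambda> > -1" and R: "R \<ge> a"
    and deriv: "\<And>s. s \<ge> a \<Longrightarrow> (f has_real_derivative f' s) (at s)"
    and contG: "continuous_on {a..} G"
    and fd: "\<And>s. s \<ge> a \<Longrightarrow> \<bar>f' s\<bar> \<le> m * G s"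
  shows "integral {a..R} (\<lambda>s. (1 + m*(s-a)) powr \<Lambda> * (f s)^2 * s^k)
     \<le> 2 * ((1 + m*(R-a)) powr (\<Lambda>+1) / (m*(\<Lambda>+1)) * (f R)^2 * R^k)
       + (4/(\<Lambda>+1)^2) * integral {a..R} (\<lambda>s. (1 + m*(s-a)) powr (\<Lambda>+2) * (G s)^2 * s^k)"
proof -
  define \<rho> where "\<rho> s = 1 + m*(s-a)" for s
  define C0 where "C0 = 1/(m*(\<Lambda>+1))"
  define h where "h s = \<rho> s powr \<Lambda> * (f s)^2 * s^k" for s
  define Q where "Q s = \<rho> s powr (\<Lambda>+2) * (G s)^2 * s^k" for s
  define T1 where "T1 s = C0 * \<rho> s powr (\<Lambda>+1) * (2 * f s * f' s) * s^k" for s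
  define T2 where "T2 s = C0 * \<rho> s powr (\<Lambda>+1) * (f s)^2 * (real k * s^(k-1))" for s
  define \<Phi> where "\<Phi> s = C0 * \<rho> s powr (\<Lambda>+1) * (f s)^2 * s^k" for s
  have rho1: "s \<ge> a \<Longrightarrow> \<rho> s \<ge> 1" for s using m by (simp add: \<rho>_def)
  have C0: "C0 > 0" using m L by (simp add: C0_def)
  have mL: "m + \<Lambda> * m > 0"
  proof -
    have "m * (1 + \<Lambda>) > 0" using m L by (intro mult_pos_pos) auto
    then show ?thesis by (simp add: algebra_simps)
  qed
  have contf: "continuous_on {a..} f"
    using deriv by (intro continuous_at_imp_continuous_on) (auto intro: DERIV_isCont)
  have contrho: "continuous_on A \<rho>" for A unfolding \<rho>_def by (intro continuous_intros)
  have sub: "{a..R} \<subseteq> {a..}" by auto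
  have contf': "continuous_on {a..R} f" using contf continuous_on_subset sub by blast
  have contG': "continuous_on {a..R} G" using contG continuous_on_subset sub by blast
  have conth: "continuous_on {a..R} h"
    unfolding h_def using rho1
    by (intro continuous_intros contf' contrho) (auto dest!: rho1)
  have contQ: "continuous_on {a..R} Q"
    unfolding Q_def using rho1
    by (intro continuous_intros contG' contrho) (auto dest!: rho1)
  have contT2: "continuous_on {a..R} T2"
    unfolding T2_def using rho1
    by (intro continuous_intros contf' contrho) (auto dest!: rho1)
  have dPhi: "(\<Phi> has_real_derivative (h s + T1 s + T2 s)) (at s)" if s: "s \<ge> a" for s
  proof -
    have rs: "\<rho> s > 0" using rho1[OF s] by simp
    have d0: "(\<rho> has_real_derivative m) (at s)"
      unfolding \<rho>_def by (auto intro!: derivative_eq_intros)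
    have d1: "((\<lambda>s. \<rho> s powr (\<Lambda>+1)) has_real_derivative ((\<Lambda>+1) * \<rho> s powr (\<Lambda>+1-1) * m)) (at s)"
      using DERIV_chain2[OF has_real_derivative_powr[OF rs] d0] .
    have d2: "((\<lambda>s. (f s)^2) has_real_derivative (2 * f s * f' s)) (at s)"
      using DERIV_pow[of 2 "f s"] deriv[OF s]
      by (auto intro!: derivative_eq_intros)
    have d3: "((\<lambda>s. s^k) has_real_derivative (real k * s^(k-1))) (at s)"
      using DERIV_pow[of k s] by simp
    let ?d1 = "(\<Lambda>+1) * \<rho> s powr (\<Lambda>+1-1) * m"
    let ?d2 = "2 * f s * f' s"
    let ?d3 = "real k * s^(k-1)"
    have D: "((\<lambda>s. C0 * ((\<rho> s powr (\<Lambda>+1) * (f s)^2) * s^k)) has_real_derivative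
       C0 * ((?d1 * (f s)^2 + ?d2 * \<rho> s powr (\<Lambda>+1)) * s^k + ?d3 * (\<rho> s powr (\<Lambda>+1) * (f s)^2))) (at s)"
      by (rule DERIV_cmult[OF DERIV_mult[OF DERIV_mult[OF d1 d2] d3]])
    moreover have "(\<lambda>s. C0 * ((\<rho> s powr (\<Lambda>+1) * (f s)^2) * s^k)) = \<Phi>"
      by (auto simp: \<Phi>_def fun_eq_iff mult_ac)
    moreover have "C0 * ((?d1 * (f s)^2 + ?d2 * \<rho> s powr (\<Lambda>+1)) * s^k + ?d3 * (\<rho> s powr (\<Lambda>+1) * (f s)^2)) = h s + T1 s + T2 s"
    proof -
      have c1: "C0 * ((\<Lambda>+1) * m) = 1" using m L by (simp add: C0_def)
      have "C0 * ((?d1 * (f s)^2 + ?d2 * \<rho> s powr (\<Lambda>+1)) * s^k + ?d3 * (\<rho> s powr (\<Lambda>+1) * (f s)^2))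
          = (C0 * ((\<Lambda>+1) * m)) * h s + T1 s + T2 s"
        unfolding h_def T1_def T2_def by (simp add: algebra_simps)
      then show ?thesis using c1 by simp
    qed
    ultimately show ?thesis by simp
  qed
  have FTC: "((\<lambda>s. h s + T1 s + T2 s) has_integral (\<Phi> R - \<Phi> a)) {a..R}"
    using R dPhi
    by (intro fundamental_theorem_of_calculus)
       (auto simp: has_real_derivative_iff_has_vector_derivative[symmetric] intro: has_field_derivative_at_within)
  have ih: "h integrable_on {a..R}" by (rule integrable_continuous_real[OF conth])
  have iQ: "Q integrable_on {a..R}" by (rule integrable_continuous_real[OF contQ])
  have iT2: "T2 integrable_on {a..R}" by (rule integrable_continuous_real[OF contT2])
  have iT1: "T1 integrable_on {a..R}"
  proof -
    have "(\<lambda>s. (h s + T1 s + T2 s) - h s - T2 s) integrable_on {a..R}"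
      using FTC ih iT2 by (intro integrable_diff) (auto simp: has_integral_integrable)
    then show ?thesis by simp
  qed
  have eq: "integral {a..R} h + integral {a..R} T1 + integral {a..R} T2 = \<Phi> R - \<Phi> a"
  proof -
    have "integral {a..R} (\<lambda>s. h s + T1 s + T2 s) = \<Phi> R - \<Phi> a"
      using FTC by (rule integral_unique)
    moreover have "integral {a..R} (\<lambda>s. h s + T1 s + T2 s) = integral {a..R} (\<lambda>s. h s + T1 s) + integral {a..R} T2"
      using ih iT1 iT2 by (intro integral_add integrable_add)
    moreover have "integral {a..R} (\<lambda>s. h s + T1 s) = integral {a..R} h + integral {a..R} T1"
      using ih iT1 by (intro integral_add)
    ultimately show ?thesis by simp
  qed
  have T2nn: "integral {a..R} T2 \<ge> 0"
  proof (rule integral_nonneg[OF iT2])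
    fix x assume "x \<in> {a..R}"
    then have "x \<ge> 0" using a by auto
    then show "0 \<le> T2 x" unfolding T2_def using C0 by (intro mult_nonneg_nonneg) auto
  qed
  have Phia: "\<Phi> a \<ge> 0" using C0 a rho1[of a] by (simp add: \<Phi>_def)
  have pw: "- T1 s \<le> (1/2) * h s + (2/(\<Lambda>+1)^2) * Q s" if s: "s \<in> {a..R}" for s
  proof -
    have s': "s \<ge> a" using s by simp
    have rs: "\<rho> s > 0" using rho1[OF s'] by simp
    have sk: "s^k \<ge> 0" using s' a by simp
    have W: "\<rho> s powr \<Lambda> \<ge> 0" by simp
    have p1: "\<rho> s powr (\<Lambda>+1) = \<rho> s powr \<Lambda> * \<rho> s" using rs by (simp add: powr_add)
    have p2: "\<rho> s powr (\<Lambda>+2) = \<rho> s powr \<Lambda> * (\<rho> s)^2" using rs by (simp add: powr_add)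
    have "- T1 s \<le> C0 * \<rho> s powr (\<Lambda>+1) * (2 * \<bar>f s\<bar> * \<bar>f' s\<bar>) * s^k"
    proof -
      have nn: "C0 * \<rho> s powr (\<Lambda>+1) * s^k \<ge> 0" using C0 sk by simp
      have ab: "- (2 * f s * f' s) \<le> 2 * \<bar>f s\<bar> * \<bar>f' s\<bar>"
      proof -
        have "- (f s * f' s) \<le> \<bar>f s * f' s\<bar>" by (rule abs_ge_minus_self)
        then show ?thesis by (simp add: abs_mult)
      qed
      have "- T1 s = (C0 * \<rho> s powr (\<Lambda>+1) * s^k) * (- (2 * f s * f' s))"
        unfolding T1_def by (simp add: algebra_simps)
      also have "\<dots> \<le> (C0 * \<rho> s powr (\<Lambda>+1) * s^k) * (2 * \<bar>f s\<bar> * \<bar>f' s\<bar>)"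
        by (rule mult_left_mono[OF ab nn])
      also have "\<dots> = C0 * \<rho> s powr (\<Lambda>+1) * (2 * \<bar>f s\<bar> * \<bar>f' s\<bar>) * s^k"
        by (simp add: algebra_simps)
      finally show ?thesis .
    qed
    also have "\<dots> \<le> C0 * \<rho> s powr (\<Lambda>+1) * (2 * \<bar>f s\<bar> * (m * G s)) * s^k"
      using fd[OF s'] C0 sk by (intro mult_right_mono mult_left_mono) auto
    also have "\<dots> = (2/(\<Lambda>+1)) * (\<rho> s powr \<Lambda> * \<rho> s) * \<bar>f s\<bar> * G s * s^k"
      using m L mL unfolding p1 C0_def by (simp add: field_simps)
    also have "\<dots> \<le> (1/2) * (\<rho> s powr \<Lambda> * \<bar>f s\<bar>^2 * s^k) + ((2/(\<Lambda>+1))^2/2) * (\<rho> s powr \<Lambda> * (\<rho> s)^2 * (G s)^2 * s^k)"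
      by (rule amgm_aux[OF W sk])
    also have "\<dots> = (1/2) * h s + (2/(\<Lambda>+1)^2) * Q s"
      unfolding h_def Q_def p2 by (simp add: power_divide)
    finally show ?thesis .
  qed
  have "- integral {a..R} T1 \<le> integral {a..R} (\<lambda>s. (1/2) * h s + (2/(\<Lambda>+1)^2) * Q s)"
  proof -
    have i2: "(\<lambda>s. (1/2) * h s + (2/(\<Lambda>+1)^2) * Q s) integrable_on {a..R}"
      using ih iQ by (intro integrable_add integrable_on_mult_right)
    have "integral {a..R} (\<lambda>s. - T1 s) \<le> integral {a..R} (\<lambda>s. (1/2) * h s + (2/(\<Lambda>+1)^2) * Q s)"
      by (rule integral_le[OF integrable_neg[OF iT1] i2]) (use pw in auto)
    moreover have "integral {a..R} (\<lambda>s. - T1 s) = - integral {a..R} T1" by (rule integral_neg)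
    ultimately show ?thesis by simp
  qed
  also have "\<dots> = (1/2) * integral {a..R} h + (2/(\<Lambda>+1)^2) * integral {a..R} Q"
    using ih iQ by (subst integral_add) (auto intro: integrable_on_mult_right simp del: times_divide_eq_left times_divide_eq_right)
  finally have "- integral {a..R} T1 \<le> (1/2) * integral {a..R} h + (2/(\<Lambda>+1)^2) * integral {a..R} Q" .
  then have "integral {a..R} h \<le> 2 * \<Phi> R + (4/(\<Lambda>+1)^2) * integral {a..R} Q"
    using eq T2nn Phia by (simp add: field_simps)
  then show ?thesis
    unfolding h_def Q_def \<Phi>_def C0_def \<rho>_def by simp
qed

lemma hardy1d:
  fixes f f' G P :: "real \<Rightarrow> real" and k :: nat and m a \<Lambda> K :: real
  assumes m: "m > 0" and a: "a > 0" and L: "\<Lambda> > -1" and K: "K \<ge> 0"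
    and deriv: "\<And>s. s \<ge> a \<Longrightarrow> (f has_real_derivative f' s) (at s)"
    and contG: "continuous_on {a..} G"
    and contP: "continuous_on {a..} P"
    and fd: "\<And>s. s \<ge> a \<Longrightarrow> \<bar>f' s\<bar> \<le> m * G s"
    and GP: "\<And>s. s \<ge> a \<Longrightarrow> (G s)^2 \<le> P s"
    and fP: "\<And>s. s \<ge> a \<Longrightarrow> (f s)^2 \<le> K * (1 + m*(s-a))^2 * P s"
  shows "(\<integral>\<^sup>+s. ennreal ((1 + m*(s-a)) powr \<Lambda> * (f s)^2 * s^k) * indicator {a..} s \<partial>lborel)
    \<le> ennreal (4/(\<Lambda>+1)^2) * (\<integral>\<^sup>+s. ennreal ((1 + m*(s-a)) powr (\<Lambda>+2) * P s * s^k) * indicator {a..} s \<partial>lborel)"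
proof -
  define \<rho> where "\<rho> s = 1 + m*(s-a)" for s
  define h where "h s = \<rho> s powr \<Lambda> * (f s)^2 * s^k" for s
  define Q where "Q s = \<rho> s powr (\<Lambda>+2) * (G s)^2 * s^k" for s
  define c where "c = 4/(\<Lambda>+1)^2"
  define J where "J = (\<integral>\<^sup>+s. ennreal (\<rho> s powr (\<Lambda>+2) * P s * s^k) * indicator {a..} s \<partial>lborel)"
  have c: "c > 0" using L by (simp add: c_def)
  have rho1: "s \<ge> a \<Longrightarrow> \<rho> s \<ge> 1" for s using m by (simp add: \<rho>_def)
  have Pnn: "s \<ge> a \<Longrightarrow> P s \<ge> 0" for s using GP[of s] by (meson order_trans zero_le_power2)
  have hnn: "s \<ge> a \<Longrightarrow> h s \<ge> 0" for s using a unfolding h_def by simp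
  have contf: "continuous_on {a..} f"
    using deriv by (intro continuous_at_imp_continuous_on) (auto intro: DERIV_isCont)
  have contrho: "continuous_on A \<rho>" for A unfolding \<rho>_def by (intro continuous_intros)
  have conth: "continuous_on {a..} h"
    unfolding h_def using rho1
    by (intro continuous_intros contf contrho) (auto dest!: rho1)
  have Qnn: "s \<ge> a \<Longrightarrow> Q s \<ge> 0" for s using a unfolding Q_def by simp
  have contQ: "continuous_on {a..} Q"
    unfolding Q_def using rho1
    by (intro continuous_intros contG contrho) (auto dest!: rho1)
  have "(\<integral>\<^sup>+s. ennreal (h s) * indicator {a..} s \<partial>lborel) \<le> ennreal c * J"
  proof (cases "J = \<infinity>")
    case True
    then show ?thesis using c by (simp add: ennreal_mult_top)
  next
    case False
    then obtain Jr where J: "J = ennreal Jr" "Jr \<ge> 0" by (cases J) (auto simp: top_ennreal.rep_eq)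
    have measP: "(\<lambda>s. ennreal (\<rho> s powr (\<Lambda>+2) * P s * s^k) * indicator {a..} s) \<in> borel_measurable borel"
    proof -
      have "continuous_on {a..} (\<lambda>s. \<rho> s powr (\<Lambda>+2) * P s * s^k)"
        by (intro continuous_intros contP contrho) (auto dest!: rho1)
      then have "(\<lambda>s. indicator {a..} s *\<^sub>R (\<rho> s powr (\<Lambda>+2) * P s * s^k)) \<in> borel_measurable borel"
        by (intro borel_measurable_continuous_on_indicator) auto
      then have "(\<lambda>s. ennreal (indicator {a..} s *\<^sub>R (\<rho> s powr (\<Lambda>+2) * P s * s^k))) \<in> borel_measurable borel"
        by measurable
      moreover have "(\<lambda>s. ennreal (indicator {a..} s *\<^sub>R (\<rho> s powr (\<Lambda>+2) * P s * s^k))) = (\<lambda>s. ennreal (\<rho> s powr (\<Lambda>+2) * P s * s^k) * indicator {a..} s)"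
        by (auto simp: indicator_def fun_eq_iff)
      ultimately show ?thesis by simp
    qed
    have fin: "(\<integral>\<^sup>+s. ennreal (h s) * indicator {a..} s \<partial>lborel) < \<infinity>"
    proof -
      have "(\<integral>\<^sup>+s. ennreal (h s) * indicator {a..} s \<partial>lborel)
          \<le> (\<integral>\<^sup>+s. ennreal K * (ennreal (\<rho> s powr (\<Lambda>+2) * P s * s^k) * indicator {a..} s) \<partial>lborel)"
      proof (rule nn_integral_mono)
        fix s
        show "ennreal (h s) * indicator {a..} s \<le> ennreal K * (ennreal (\<rho> s powr (\<Lambda>+2) * P s * s^k) * indicator {a..} s)"
        proof (cases "s \<ge> a")
          case True
          have rs: "\<rho> s > 0" using rho1[OF True] by simp
          have sk: "s^k \<ge> 0" using True a by simp
          have p2: "\<rho> s powr (\<Lambda>+2) = \<rho> s powr \<Lambda> * (\<rho> s)^2" using rs by (simp add: powr_add)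
          have "h s \<le> \<rho> s powr \<Lambda> * (K * (\<rho> s)^2 * P s) * s^k"
            unfolding h_def using fP[OF True] sk
            by (intro mult_right_mono mult_left_mono) (auto simp: \<rho>_def)
          also have "\<dots> = K * (\<rho> s powr (\<Lambda>+2) * P s * s^k)" unfolding p2 by (simp add: algebra_simps)
          finally have "h s \<le> K * (\<rho> s powr (\<Lambda>+2) * P s * s^k)" .
          then show ?thesis using True K Pnn[OF True] sk
            by (simp add: ennreal_mult[symmetric] ennreal_leI)
        qed simp
      qed
      also have "\<dots> = ennreal K * J"
      proof -
        have mP: "(\<lambda>s. ennreal (\<rho> s powr (\<Lambda>+2) * P s * s^k) * indicator {a..} s) \<in> borel_measurable lborel"
          using measP by simp
        show ?thesis unfolding J_def using nn_integral_cmult[OF mP, of "ennreal K"] by simp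
      qed
      also have "\<dots> < \<infinity>" using J by (simp add: ennreal_mult_less_top)
      finally show ?thesis .
    qed
    have bound: "integral {a..R0} h \<le> c * Jr" if R0: "R0 \<ge> a" for R0
    proof (rule field_le_epsilon)
      fix e :: real assume e: "e > 0"
      define D where "D = (1/a + m)/(m*(\<Lambda>+1))"
      have "m*(\<Lambda>+1) > 0" using m L by simp
      have "1/a + m > 0" using a m by (simp add: add_pos_pos)
      have D: "D > 0" unfolding D_def using \<open>m*(\<Lambda>+1) > 0\<close> \<open>1/a + m > 0\<close> by (rule divide_pos_pos[rotated])
      obtain R where R: "R \<ge> R0" "R * h R \<le> e / (2*D)"
        using tail_small[OF a fin, of "e/(2*D)" R0] e D unfolding h_def by auto
      have Ra: "R \<ge> a" using R R0 by simp
      have "integral {a..R0} h \<le> integral {a..R} h"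
        using R Ra hnn conth
        by (intro integral_subset_le integrable_continuous_real) (auto intro: continuous_on_subset)
      also have "\<dots> \<le> 2 * ((1 + m*(R-a)) powr (\<Lambda>+1) / (m*(\<Lambda>+1)) * (f R)^2 * R^k) + c * integral {a..R} Q"
        unfolding h_def Q_def c_def \<rho>_def
        by (rule hardy_step[OF m a L Ra deriv contG fd])
      also have "(1 + m*(R-a)) powr (\<Lambda>+1) / (m*(\<Lambda>+1)) * (f R)^2 * R^k = \<rho> R / (m*(\<Lambda>+1)) * h R"
      proof -
        have rs: "\<rho> R > 0" using rho1[OF Ra] by simp
        then show ?thesis unfolding h_def \<rho>_def by (simp add: powr_add field_simps)
      qed
      also have "\<rho> R / (m*(\<Lambda>+1)) * h R \<le> D * (R * h R)"
      proof -
        have "\<rho> R \<le> (1/a + m) * R"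
        proof -
          have "1 \<le> R / a" using Ra a by simp
          moreover have "(1/a + m) * R = R/a + m*R" by (simp add: algebra_simps)
          moreover have "m * a > 0" using m a by simp
          ultimately show ?thesis unfolding \<rho>_def by (simp add: algebra_simps)
        qed
        moreover have "m*(\<Lambda>+1) > 0" using m L by simp
        ultimately have "\<rho> R / (m*(\<Lambda>+1)) \<le> ((1/a + m) * R) / (m*(\<Lambda>+1))"
          by (intro divide_right_mono) auto
        then have "\<rho> R / (m*(\<Lambda>+1)) \<le> D * R" by (simp add: D_def)
        from mult_right_mono[OF this hnn[OF Ra]] show ?thesis by (simp add: mult.assoc)
      qed
      also have "D * (R * h R) \<le> e/2" using R(2) D by (simp add: field_simps)
      finally have 1: "integral {a..R0} h \<le> e + c * integral {a..R} Q" by simp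
      have "ennreal (integral {a..R} Q) = (\<integral>\<^sup>+s. ennreal (Q s) * indicator {a..R} s \<partial>lborel)"
        using Ra contQ
        by (intro nn_integral_has_integral_lebesgue'[symmetric] integrable_integral integrable_continuous_real)
           (auto intro: continuous_on_subset Qnn)
      also have "\<dots> \<le> J"
        unfolding J_def
      proof (rule nn_integral_mono)
        fix s
        show "ennreal (Q s) * indicator {a..R} s \<le> ennreal (\<rho> s powr (\<Lambda>+2) * P s * s^k) * indicator {a..} s"
        proof (cases "s \<in> {a..R}")
          case True
          then have sa: "s \<ge> a" by simp
          have "Q s \<le> \<rho> s powr (\<Lambda>+2) * P s * s^k"
            unfolding Q_def using GP[OF sa] sa a by (intro mult_right_mono mult_left_mono) auto
          then show ?thesis using True by (simp add: ennreal_leI)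
        qed simp
      qed
      finally have "integral {a..R} Q \<le> Jr" using J by (simp add: ennreal_le_iff)
      with 1 c show "integral {a..R0} h \<le> c * Jr + e" by (smt (verit) mult_left_mono)
    qed
    define g where "g N s = ennreal (h s) * indicator {a..a + real N} s" for N s
    have inc: "incseq g"
      by (auto simp: incseq_def g_def le_fun_def indicator_def intro!: mult_left_mono)
    have gm: "g N \<in> borel_measurable borel" for N
    proof -
      have "(\<lambda>s. indicator {a..a + real N} s *\<^sub>R h s) \<in> borel_measurable borel"
        using conth by (intro borel_measurable_continuous_on_indicator) (auto intro: continuous_on_subset)
      then have "(\<lambda>s. ennreal (indicator {a..a + real N} s *\<^sub>R h s)) \<in> borel_measurable borel" by measurable
      moreover have "(\<lambda>s. ennreal (indicator {a..a + real N} s *\<^sub>R h s)) = g N"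
        by (auto simp: indicator_def fun_eq_iff g_def)
      ultimately show ?thesis by simp
    qed
    have sup: "(SUP N. g N s) = ennreal (h s) * indicator {a..} s" for s
    proof (rule antisym)
      show "(SUP N. g N s) \<le> ennreal (h s) * indicator {a..} s"
        by (rule SUP_least) (auto simp: g_def indicator_def)
      obtain N :: nat where "real N \<ge> s - a" using real_arch_simple by blast
      then have "g N s = ennreal (h s) * indicator {a..} s" by (auto simp: g_def indicator_def)
      then show "ennreal (h s) * indicator {a..} s \<le> (SUP N. g N s)"
        by (metis SUP_upper UNIV_I)
    qed
    have "(\<integral>\<^sup>+s. ennreal (h s) * indicator {a..} s \<partial>lborel) = (SUP N. \<integral>\<^sup>+s. g N s \<partial>lborel)"
    proof -
      have gm': "g N \<in> borel_measurable lborel" for N using gm[of N] by simp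
      show ?thesis unfolding sup[symmetric] by (rule nn_integral_monotone_convergence_SUP[OF inc gm'])
    qed
    also have "\<dots> \<le> ennreal (c * Jr)"
    proof (rule SUP_least)
      fix N :: nat
      have "(\<integral>\<^sup>+s. g N s \<partial>lborel) = ennreal (integral {a..a + real N} h)"
        unfolding g_def using conth hnn
        by (intro nn_integral_has_integral_lebesgue' integrable_integral integrable_continuous_real)
           (auto intro: continuous_on_subset)
      also have "\<dots> \<le> ennreal (c * Jr)" using bound[of "a + real N"] by (simp add: ennreal_leI)
      finally show "(\<integral>\<^sup>+s. g N s \<partial>lborel) \<le> ennreal (c * Jr)" .
    qed
    also have "\<dots> = ennreal c * J" using J c by (simp add: ennreal_mult)
    finally show ?thesis .
  qed
  then show ?thesis unfolding h_def J_def c_def \<rho>_def .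
qed

definition nice :: "'n::finite stfun \<Rightarrow> bool" where
  "nice F \<longleftrightarrow> (\<forall>p. F differentiable at p) \<and> (\<forall>u. continuous_on UNIV (pd F u))"

lemma pd_deriv: "F differentiable at p \<Longrightarrow> (F has_derivative (\<lambda>u. pd F u p)) (at p)"
  unfolding pd_def using frechet_derivative_works by auto

lemma pd_eq: "(F has_derivative F') (at p) \<Longrightarrow> pd F u p = F' u"
  unfolding pd_def using frechet_derivative_at by metis

lemma C2_cont_pd: "C2 w \<Longrightarrow> continuous_on UNIV (pd w v)"
proof -
  assume "C2 w"
  then have "\<And>p. pd w v differentiable at p" unfolding C2_def by blast
  then show ?thesis by (metis differentiable_imp_continuous_within continuous_at_imp_continuous_on)
qed

lemma C2_cont_pd2: "C2 w \<Longrightarrow> continuous_on UNIV (pd (pd w v) u)"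
  unfolding C2_def by blast

lemma C2_nice: "C2 w \<Longrightarrow> nice w"
  unfolding nice_def using C2_cont_pd by (auto simp: C2_def)

lemma hd_snd: "((\<lambda>p::real\<times>(real^'n::finite). (snd p)$a) has_derivative (\<lambda>u. (snd u)$a)) (at p)"
  by (rule bounded_linear.has_derivative[OF bounded_linear_vec_nth has_derivative_snd[OF has_derivative_ident]])

lemma hd_fst: "((\<lambda>p::real\<times>(real^'n::finite). fst p) has_derivative (\<lambda>u. fst u)) (at p)"
  by (rule has_derivative_fst[OF has_derivative_ident])

lemma Lb_eq: "Lb a w = (\<lambda>p. (snd p)$a * pd w (1,0) p + fst p * pd w (0, axis a 1) p)"
  by (auto simp: Lb_def dt_def dx_def fun_eq_iff)

lemma Om_eq: "Om a b w = (\<lambda>p. (snd p)$a * pd w (0, axis b 1) p - (snd p)$b * pd w (0, axis a 1) p)"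
  by (auto simp: Om_def dx_def fun_eq_iff)

lemma nice_Lb:
  assumes w: "C2 w"
  shows "nice (Lb a w)" (is "nice ?F")
proof -
  let ?d0 = "pd w (1,0)" and ?da = "pd w (0, axis a 1)"
  have dd: "\<And>v p. (pd w v has_derivative (\<lambda>u. pd (pd w v) u p)) (at p)"
    using w unfolding C2_def by (blast intro: pd_deriv)
  have D: "(Lb a w has_derivative (\<lambda>u. ((snd p)$a * pd ?d0 u p + (snd u)$a * ?d0 p) + (fst p * pd ?da u p + fst u * ?da p))) (at p)" for p
    unfolding Lb_eq
    by (intro has_derivative_add has_derivative_mult hd_snd hd_fst dd)
  have cc: "continuous_on UNIV (\<lambda>p. ((snd p)$a * pd ?d0 u p + (snd u)$a * ?d0 p) + (fst p * pd ?da u p + fst u * ?da p))" for u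
    by (intro continuous_intros C2_cont_pd[OF w] C2_cont_pd2[OF w])
  have ee: "pd (Lb a w) u = (\<lambda>p. ((snd p)$a * pd ?d0 u p + (snd u)$a * ?d0 p) + (fst p * pd ?da u p + fst u * ?da p))" for u
    by (intro ext) (simp only: pd_eq[OF D])
  have "\<forall>p. ?F differentiable at p" using D by (blast intro: differentiableI)
  moreover have "\<forall>u. continuous_on UNIV (pd ?F u)" using cc ee by simp
  ultimately show ?thesis unfolding nice_def by blast
qed

lemma nice_Om:
  assumes w: "C2 w"
  shows "nice (Om a b w)" (is "nice ?F")
proof -
  let ?db = "pd w (0, axis b 1)" and ?da = "pd w (0, axis a 1)"
  have dd: "\<And>v p. (pd w v has_derivative (\<lambda>u. pd (pd w v) u p)) (at p)"
    using w unfolding C2_def by (blast intro: pd_deriv)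
  have D: "(Om a b w has_derivative (\<lambda>u. ((snd p)$a * pd ?db u p + (snd u)$a * ?db p) - ((snd p)$b * pd ?da u p + (snd u)$b * ?da p))) (at p)" for p
    unfolding Om_eq
    by (intro has_derivative_diff has_derivative_mult hd_snd hd_fst dd)
  have cc: "continuous_on UNIV (\<lambda>p. ((snd p)$a * pd ?db u p + (snd u)$a * ?db p) - ((snd p)$b * pd ?da u p + (snd u)$b * ?da p))" for u
    by (intro continuous_intros C2_cont_pd[OF w] C2_cont_pd2[OF w])
  have ee: "pd (Om a b w) u = (\<lambda>p. ((snd p)$a * pd ?db u p + (snd u)$a * ?db p) - ((snd p)$b * pd ?da u p + (snd u)$b * ?da p))" for u
    by (intro ext) (simp only: pd_eq[OF D])
  have "\<forall>p. ?F differentiable at p" using D by (blast intro: differentiableI)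
  moreover have "\<forall>u. continuous_on UNIV (pd ?F u)" using cc ee by simp
  ultimately show ?thesis unfolding nice_def by blast
qed

lemma nice_cont: "nice F \<Longrightarrow> continuous_on UNIV F"
proof -
  assume "nice F"
  then have "\<And>p. F differentiable at p" unfolding nice_def by blast
  then show ?thesis by (metis differentiable_imp_continuous_within continuous_at_imp_continuous_on)
qed

lemma pair_expansion: "((0::real), y) = (\<Sum>b\<in>UNIV. (y$b) *\<^sub>R ((0::real), axis b (1::real)))"
proof -
  have "snd (\<Sum>b\<in>UNIV. (y$b) *\<^sub>R ((0::real), axis b (1::real))) = y"
    using basis_expansion[of y] by (simp add: snd_sum scalar_mult_eq_scaleR)
  moreover have "fst (\<Sum>b\<in>UNIV. (y$b) *\<^sub>R ((0::real), axis b (1::real))) = 0"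
    by (simp add: fst_sum)
  ultimately show ?thesis by (simp add: prod_eq_iff)
qed

lemma ray_deriv:
  fixes F :: "'n::finite stfun"
  assumes F: "nice F"
  shows "((\<lambda>s. F (t, s *\<^sub>R y)) has_real_derivative (\<Sum>b\<in>UNIV. y$b * dx b F (t, s *\<^sub>R y))) (at s)"
proof -
  let ?q = "(t, s *\<^sub>R y)"
  have dF: "(F has_derivative (\<lambda>u. pd F u ?q)) (at ?q)" using F by (auto simp: nice_def intro!: pd_deriv)
  have lin: "linear (\<lambda>u. pd F u ?q)" using has_derivative_linear[OF dF] .
  have di: "((\<lambda>s. (t, s *\<^sub>R y)) has_derivative (\<lambda>h. (0, h *\<^sub>R y))) (at s)"
    by (auto intro!: derivative_eq_intros)
  have "((\<lambda>s. F (t, s *\<^sub>R y)) has_derivative (\<lambda>h. pd F (0, h *\<^sub>R y) ?q)) (at s)"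
    using has_derivative_compose[OF di dF] by simp
  moreover have "pd F (0, h *\<^sub>R y) ?q = h * (\<Sum>b\<in>UNIV. y$b * dx b F ?q)" for h
  proof -
    have "((0::real), h *\<^sub>R y) = h *\<^sub>R (0, y)" by simp
    then have "pd F (0, h *\<^sub>R y) ?q = pd F (h *\<^sub>R (0, y)) ?q" by metis
    also have "\<dots> = h * pd F (0, y) ?q"
    proof -
      have "(\<lambda>u. pd F u ?q) (h *\<^sub>R (0, y)) = h *\<^sub>R (\<lambda>u. pd F u ?q) (0, y)" by (rule linear_scale[OF lin])
      then show ?thesis by (simp only: real_scaleR_def)
    qed
    also have "pd F (0, y) ?q = (\<Sum>b\<in>UNIV. y$b * pd F (0, axis b 1) ?q)"
    proof -
      have "pd F (0,y) ?q = (\<lambda>u. pd F u ?q) (\<Sum>b\<in>UNIV. y$b *\<^sub>R ((0::real), axis b (1::real)))"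
        by (simp only: pair_expansion[of y, symmetric])
      also have "\<dots> = (\<Sum>b\<in>UNIV. (\<lambda>u. pd F u ?q) (y$b *\<^sub>R ((0::real), axis b (1::real))))"
        by (rule linear_sum[OF lin])
      also have "\<dots> = (\<Sum>b\<in>UNIV. y$b * pd F (0, axis b 1) ?q)"
        by (rule sum.cong[OF refl]) (simp only: linear_scale[OF lin] real_scaleR_def)
      finally show ?thesis .
    qed
    finally show ?thesis by (simp add: dx_def)
  qed
  ultimately have "((\<lambda>s. F (t, s *\<^sub>R y)) has_derivative (\<lambda>h. h * (\<Sum>b\<in>UNIV. y$b * dx b F ?q))) (at s)"
    by simp
  moreover have "(\<lambda>h. h * (\<Sum>b\<in>UNIV. y$b * dx b F ?q)) = (*) (\<Sum>b\<in>UNIV. y$b * dx b F ?q)"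
    by (rule ext) (simp add: mult.commute)
  ultimately show ?thesis
    unfolding has_field_derivative_def by simp
qed

lemma slice_cont: "continuous_on UNIV G \<Longrightarrow> continuous_on UNIV (\<lambda>x. G (t, x))"
  by (rule continuous_on_compose2[of UNIV G UNIV "\<lambda>x. (t,x)"]) (auto intro!: continuous_intros)

lemma ray_cont: "continuous_on UNIV G \<Longrightarrow> continuous_on A (\<lambda>s. G (t, s *\<^sub>R (y::real^'n::finite)))"
proof -
  assume G: "continuous_on UNIV G"
  have "continuous_on A (\<lambda>s. (t, s *\<^sub>R y))"
    by (intro continuous_on_Pair continuous_on_const continuous_on_scaleR[OF continuous_on_id continuous_on_const])
  then show ?thesis by (rule continuous_on_compose2[OF G]) auto
qed

lemma nice_gradsq_cont: "nice F \<Longrightarrow> continuous_on UNIV (gradsq F)"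
proof -
  assume F: "nice F"
  have c: "\<And>u. continuous_on UNIV (pd F u)" using F unfolding nice_def by blast
  show ?thesis
    unfolding gradsq_def[abs_def] dt_def dx_def
    by (intro continuous_intros c)
qed

lemma gradsq_nn: "gradsq F p \<ge> 0"
  unfolding gradsq_def by (intro add_nonneg_nonneg sum_nonneg) auto

lemma Sigma_ex_borel[measurable]: "Sigma_ex t \<in> sets borel"
proof -
  have "closed (Sigma_ex t)" unfolding Sigma_ex_def by (intro closed_Collect_le continuous_intros)
  then show ?thesis by (rule borel_closed)
qed

lemma ray_rewrite:
  fixes y :: "real^'n::finite" and g :: "real^'n \<Rightarrow> real"
  assumes m: "norm y > 0" and t: "t > 1" and g: "\<And>x. g x \<ge> 0"
  shows "indicator {0<..} s * ennreal (s^k) * (ennreal ((2 + norm (s *\<^sub>R y) - t) powr L * g (s *\<^sub>R y)) * indicator (Sigma_ex t) (s *\<^sub>R y))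
    = ennreal ((1 + norm y * (s - (t-1)/norm y)) powr L * g (s *\<^sub>R y) * s^k) * indicator {(t-1)/norm y..} s"
proof (cases "s > 0")
  case False
  moreover have "(t-1)/norm y > 0" using m t by simp
  ultimately show ?thesis by (auto simp: indicator_def)
next
  case True
  have ns: "norm (s *\<^sub>R y) = s * norm y" using True by simp
  have e1: "2 + norm (s *\<^sub>R y) - t = 1 + norm y * (s - (t-1)/norm y)" using m ns by (simp add: field_simps)
  have e2: "(s *\<^sub>R y \<in> Sigma_ex t) \<longleftrightarrow> s \<in> {(t-1)/norm y..}"
    using m ns by (simp add: Sigma_ex_def field_simps)
  show ?thesis
  proof (cases "s \<in> {(t-1)/norm y..}")
    case False
    then show ?thesis using e2 True by simp
  next
    case c: True
    have "ennreal (s^k) * ennreal ((2 + norm (s *\<^sub>R y) - t) powr L * g (s *\<^sub>R y))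
       = ennreal ((2 + norm (s *\<^sub>R y) - t) powr L * g (s *\<^sub>R y) * s^k)"
      using True g[of "s *\<^sub>R y"] by (simp add: ennreal_mult[symmetric] mult.commute)
    then show ?thesis using c e2 True unfolding e1 by simp
  qed
qed

lemma fd_bound:
  fixes y :: "real^'n::finite"
  shows "\<bar>\<Sum>b\<in>UNIV. y$b * dx b F q\<bar> \<le> norm y * sqrt (gradsq F q)"
proof -
  have cs: "(\<Sum>b\<in>UNIV. y$b * dx b F q)^2 \<le> (\<Sum>b\<in>UNIV. (y$b)^2) * (\<Sum>b\<in>UNIV. (dx b F q)^2)"
    by (rule Cauchy_Schwarz_ineq_sum)
  have ny: "(\<Sum>b\<in>UNIV. (y$b)^2) = (norm y)^2"
  proof -
    have "(norm y)^2 = inner y y" by (rule power2_norm_eq_inner)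
    also have "\<dots> = (\<Sum>b\<in>UNIV. y$b * y$b)" by (simp add: inner_vec_def)
    finally show ?thesis by (simp add: power2_eq_square)
  qed
  have sv: "(\<Sum>b\<in>UNIV. (dx b F q)^2) \<le> gradsq F q" unfolding gradsq_def by simp
  have "(\<Sum>b\<in>UNIV. y$b * dx b F q)^2 \<le> (norm y)^2 * gradsq F q"
  proof -
    have "(\<Sum>b\<in>UNIV. (y$b)^2) * (\<Sum>b\<in>UNIV. (dx b F q)^2) \<le> (norm y)^2 * gradsq F q"
      unfolding ny by (rule mult_left_mono[OF sv]) simp
    with cs show ?thesis by (rule order_trans)
  qed
  then have "sqrt ((\<Sum>b\<in>UNIV. y$b * dx b F q)^2) \<le> sqrt ((norm y)^2 * gradsq F q)"
    by (rule real_sqrt_le_mono)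
  then show ?thesis by (simp add: real_sqrt_mult)
qed

lemma Z_bound:
  fixes F P :: "'n::finite stfun" and \<Lambda> t K :: real
  assumes L: "\<Lambda> > -1" and t: "t \<ge> 2" and K: "K \<ge> 0"
    and F: "nice F" and P: "continuous_on UNIV P"
    and gP: "\<And>p. gradsq F p \<le> P p"
    and FP: "\<And>x. norm x \<ge> t - 1 \<Longrightarrow> (F (t,x))^2 \<le> K * (2 + norm x - t)^2 * P (t,x)"
  shows "wint \<Lambda> t (\<lambda>p. (F p)^2) \<le> ennreal (4/(\<Lambda>+1)^2) * wint (\<Lambda>+2) t P"
proof -
  define k where "k = DIM(real^'n) - 1"
  define c where "c = 4/(\<Lambda>+1)^2"
  define hL where "hL x = ennreal ((2 + norm x - t) powr \<Lambda> * (F (t,x))^2) * indicator (Sigma_ex t) x" for x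
  define hR where "hR x = ennreal ((2 + norm x - t) powr (\<Lambda>+2) * P (t,x)) * indicator (Sigma_ex t) x" for x
  define A where "A = {y::real^'n. 1 \<le> norm y \<and> norm y \<le> 2}"
  define ray where "ray h y = (\<integral>\<^sup>+s. indicator {0<..} s * ennreal (s^k) * h (s *\<^sub>R y) \<partial>lborel)"
    for h :: "real^'n \<Rightarrow> ennreal" and y
  have Pnn: "P p \<ge> 0" for p using gP[of p] gradsq_nn[of F p] by linarith
  have cF: "continuous_on UNIV F" by (rule nice_cont[OF F])
  have mF[measurable]: "(\<lambda>x. F (t,x)) \<in> borel_measurable borel"
    by (intro borel_measurable_continuous_onI slice_cont cF)
  have mP[measurable]: "(\<lambda>x. P (t,x)) \<in> borel_measurable borel"
    by (intro borel_measurable_continuous_onI slice_cont P)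
  have mhL[measurable]: "hL \<in> borel_measurable borel" unfolding hL_def[abs_def] by measurable
  have mhR[measurable]: "hR \<in> borel_measurable borel" unfolding hR_def[abs_def] by measurable
  have eqL: "wint \<Lambda> t (\<lambda>p. (F p)^2) = (\<integral>\<^sup>+x. hL x \<partial>lborel)" unfolding wint_def hL_def by simp
  have eqR: "wint (\<Lambda>+2) t P = (\<integral>\<^sup>+x. hR x \<partial>lborel)" unfolding wint_def hR_def by simp
  have IL: "ennreal (ln 2) * (\<integral>\<^sup>+x. hL x \<partial>lborel) = (\<integral>\<^sup>+y. indicator A y * ray hL y \<partial>lborel)"
    using ray_identity[OF mhL] unfolding ray_def k_def A_def by simp
  have IR: "ennreal (ln 2) * (\<integral>\<^sup>+x. hR x \<partial>lborel) = (\<integral>\<^sup>+y. indicator A y * ray hR y \<partial>lborel)"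
    using ray_identity[OF mhR] unfolding ray_def k_def A_def by simp
  have pw: "indicator A y * ray hL y \<le> ennreal c * (indicator A y * ray hR y)" for y
  proof (cases "y \<in> A")
    case False then show ?thesis by simp
  next
    case True
    define m where "m = norm y"
    define a where "a = (t-1)/m"
    have m: "m \<ge> 1" "m > 0" using True by (auto simp: A_def m_def)
    have a: "a > 0" using m t by (simp add: a_def)
    have rL: "ray hL y = (\<integral>\<^sup>+s. ennreal ((1 + m*(s-a)) powr \<Lambda> * (F (t, s *\<^sub>R y))^2 * s^k) * indicator {a..} s \<partial>lborel)"
      unfolding ray_def hL_def m_def a_def
    proof (rule nn_integral_cong)
      fix s
      show "indicator {0<..} s * ennreal (s^k) * (ennreal ((2 + norm (s *\<^sub>R y) - t) powr \<Lambda> * (F (t, s *\<^sub>R y))^2) * indicator (Sigma_ex t) (s *\<^sub>R y))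
        = ennreal ((1 + norm y * (s - (t-1)/norm y)) powr \<Lambda> * (F (t, s *\<^sub>R y))^2 * s^k) * indicator {(t-1)/norm y..} s"
        by (rule ray_rewrite[of y t "\<lambda>x. (F (t,x))^2" s k \<Lambda>]) (use m t in \<open>auto simp: m_def\<close>)
    qed
    have rR: "ray hR y = (\<integral>\<^sup>+s. ennreal ((1 + m*(s-a)) powr (\<Lambda>+2) * P (t, s *\<^sub>R y) * s^k) * indicator {a..} s \<partial>lborel)"
      unfolding ray_def hR_def m_def a_def
    proof (rule nn_integral_cong)
      fix s
      show "indicator {0<..} s * ennreal (s^k) * (ennreal ((2 + norm (s *\<^sub>R y) - t) powr (\<Lambda>+2) * P (t, s *\<^sub>R y)) * indicator (Sigma_ex t) (s *\<^sub>R y))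
        = ennreal ((1 + norm y * (s - (t-1)/norm y)) powr (\<Lambda>+2) * P (t, s *\<^sub>R y) * s^k) * indicator {(t-1)/norm y..} s"
        by (rule ray_rewrite[of y t "\<lambda>x. P (t,x)" s k "\<Lambda>+2"]) (use m t Pnn in \<open>auto simp: m_def\<close>)
    qed
    have "ray hL y \<le> ennreal c * ray hR y"
      unfolding rL rR c_def
    proof (rule hardy1d[where f' = "\<lambda>s. \<Sum>b\<in>UNIV. y$b * dx b F (t, s *\<^sub>R y)"
          and G = "\<lambda>s. sqrt (gradsq F (t, s *\<^sub>R y))" and K = K])
      show "m > 0" "a > 0" "\<Lambda> > -1" "K \<ge> 0" using m a L K by auto
      show "((\<lambda>s. F (t, s *\<^sub>R y)) has_real_derivative (\<Sum>b\<in>UNIV. y$b * dx b F (t, s *\<^sub>R y))) (at s)" for s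
        by (rule ray_deriv[OF F])
      show "continuous_on {a..} (\<lambda>s. sqrt (gradsq F (t, s *\<^sub>R y)))"
        by (intro continuous_intros ray_cont nice_gradsq_cont[OF F])
      show "continuous_on {a..} (\<lambda>s. P (t, s *\<^sub>R y))"
        by (rule ray_cont[OF P])
      show "\<bar>\<Sum>b\<in>UNIV. y$b * dx b F (t, s *\<^sub>R y)\<bar> \<le> m * sqrt (gradsq F (t, s *\<^sub>R y))" for s
        unfolding m_def by (rule fd_bound)
      show "(sqrt (gradsq F (t, s *\<^sub>R y)))^2 \<le> P (t, s *\<^sub>R y)" for s
        by (simp add: real_sqrt_pow2[OF gradsq_nn] gP)
      fix s assume s: "s \<ge> a"
      have sp: "s > 0" using s a by simp
      have ns: "norm (s *\<^sub>R y) = s * m" using sp by (simp add: m_def)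
      have "s * m \<ge> a * m" using s m by (simp add: mult_right_mono)
      then have nt: "norm (s *\<^sub>R y) \<ge> t - 1" using ns m by (simp add: a_def)
      have e: "2 + norm (s *\<^sub>R y) - t = 1 + m*(s-a)"
        using ns m by (simp add: a_def field_simps)
      from FP[OF nt] show "(F (t, s *\<^sub>R y))^2 \<le> K * (1 + m*(s-a))^2 * P (t, s *\<^sub>R y)"
        unfolding e .
    qed
    then show ?thesis using True by simp
  qed
  have mray: "(\<lambda>y. indicator A y * ray hR y) \<in> borel_measurable lborel"
  proof -
    have "A \<in> sets borel" unfolding A_def by measurable
    then show ?thesis unfolding ray_def by measurable
  qed
  have "ennreal (ln 2) * wint \<Lambda> t (\<lambda>p. (F p)^2) \<le> (\<integral>\<^sup>+y. ennreal c * (indicator A y * ray hR y) \<partial>lborel)"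
    unfolding eqL IL by (rule nn_integral_mono) (rule pw)
  also have "\<dots> = ennreal c * (\<integral>\<^sup>+y. indicator A y * ray hR y \<partial>lborel)"
    by (rule nn_integral_cmult[OF mray])
  also have "\<dots> = ennreal (ln 2) * (ennreal c * wint (\<Lambda>+2) t P)"
    unfolding eqR IR[symmetric] by (simp add: mult_ac)
  finally have fin: "ennreal (ln 2) * wint \<Lambda> t (\<lambda>p. (F p)^2) \<le> ennreal (ln 2) * (ennreal c * wint (\<Lambda>+2) t P)" .
  have l0: "ennreal (ln 2) \<noteq> 0" by simp
  have l1: "ennreal (ln 2) \<noteq> top" by simp
  from fin show ?thesis unfolding c_def ennreal_mult_le_mult_iff[OF l0 l1] .
qed

lemma sq_sum_le: "(u + v)^2 \<le> 2 * u^2 + 2 * (v::real)^2"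
proof -
  have "0 \<le> (u - v)^2" by simp
  then show ?thesis by (simp add: power2_eq_square algebra_simps)
qed

lemma L0_pw:
  fixes x :: "real^'n::finite" and d :: "'n \<Rightarrow> real" and t D :: real
  assumes t: "t \<ge> 2" and r: "norm x \<ge> t - 1"
  shows "(t * D + (\<Sum>a\<in>UNIV. x$a * d a))^2
    \<le> 8 * (\<Sum>a\<in>UNIV. (x$a * D + t * d a)^2) + 18 * ((2 + norm x - t)^2 * (D^2 + (\<Sum>a\<in>UNIV. (d a)^2)))"
proof -
  define R where "R = norm x"
  define E where "E = (\<Sum>a\<in>UNIV. x$a * d a)"
  define S where "S = (\<Sum>a\<in>UNIV. x$a * (x$a * D + t * d a))"
  define AL where "AL = (\<Sum>a\<in>UNIV. (x$a * D + t * d a)^2)"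
  define Dd where "Dd = (\<Sum>a\<in>UNIV. (d a)^2)"
  define \<rho> where "\<rho> = 2 + R - t"
  have R1: "R \<ge> 1" using t r by (simp add: R_def)
  have R0: "R > 0" using R1 by simp
  have nx: "(\<Sum>a\<in>UNIV. (x$a)^2) = R^2"
  proof -
    have "R^2 = inner x x" unfolding R_def by (rule power2_norm_eq_inner)
    also have "\<dots> = (\<Sum>a\<in>UNIV. x$a * x$a)" by (simp add: inner_vec_def)
    finally show ?thesis by (simp add: power2_eq_square)
  qed
  have SE: "S = R^2 * D + t * E"
  proof -
    have "S = (\<Sum>a\<in>UNIV. (x$a)^2 * D + t * (x$a * d a))"
      unfolding S_def by (intro sum.cong) (auto simp: algebra_simps power2_eq_square)
    also have "\<dots> = (\<Sum>a\<in>UNIV. (x$a)^2) * D + t * E"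
      unfolding E_def by (simp add: sum.distrib sum_distrib_left sum_distrib_right)
    finally show ?thesis using nx by simp
  qed
  have key: "t * D + E = (t / R^2) * S + ((R^2 - t^2) / R^2) * E"
    using R0 unfolding SE by (simp add: field_simps power2_eq_square)
  have csS: "S^2 \<le> R^2 * AL"
    using Cauchy_Schwarz_ineq_sum[of "\<lambda>a. x$a" "\<lambda>a. x$a * D + t * d a" UNIV] nx
    unfolding S_def AL_def by simp
  have csE: "E^2 \<le> R^2 * Dd"
    using Cauchy_Schwarz_ineq_sum[of "\<lambda>a. x$a" d UNIV] nx
    unfolding E_def Dd_def by simp
  have AL0: "AL \<ge> 0" unfolding AL_def by (simp add: sum_nonneg)
  have Dd0: "Dd \<ge> 0" unfolding Dd_def by (simp add: sum_nonneg)
  have u: "((t / R^2) * S)^2 \<le> 4 * AL"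
  proof -
    have "((t / R^2) * S)^2 = (t^2 / (R^2)^2) * S^2" by (simp add: power_mult_distrib power_divide)
    also have "\<dots> \<le> (t^2 / (R^2)^2) * (R^2 * AL)" by (rule mult_left_mono[OF csS]) simp
    also have "\<dots> = (t / R)^2 * AL" using R0 by (simp add: field_simps power2_eq_square)
    also have "\<dots> \<le> 2^2 * AL"
    proof (rule mult_right_mono[OF _ AL0])
      have "t / R \<le> 2" using R0 t r by (simp add: R_def field_simps)
      moreover have "0 \<le> t / R" using R0 t by simp
      ultimately show "(t / R)^2 \<le> 2^2" by (rule power_mono)
    qed
    finally show ?thesis by simp
  qed
  have v: "(((R^2 - t^2) / R^2) * E)^2 \<le> 9 * \<rho>^2 * Dd"
  proof -
    have "(((R^2 - t^2) / R^2) * E)^2 = ((R^2 - t^2)^2 / (R^2)^2) * E^2" by (simp add: power_mult_distrib power_divide)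
    also have "\<dots> \<le> ((R^2 - t^2)^2 / (R^2)^2) * (R^2 * Dd)" by (rule mult_left_mono[OF csE]) simp
    also have "\<dots> = ((R - t) * ((R + t) / R))^2 * Dd" using R0 by (simp add: field_simps power2_eq_square)
    also have "\<dots> \<le> (\<rho> * 3)^2 * Dd"
    proof (rule mult_right_mono[OF _ Dd0])
      have a1: "\<bar>R - t\<bar> \<le> \<rho>" using r t unfolding \<rho>_def R_def by linarith
      have a2: "(R + t) / R \<le> 3" "0 \<le> (R + t) / R" using R0 t r by (auto simp: R_def field_simps)
      have "\<bar>(R - t) * ((R + t) / R)\<bar> = \<bar>R - t\<bar> * ((R + t) / R)"
        using a2(2) by (simp only: abs_mult abs_of_nonneg)
      also have "\<dots> \<le> \<rho> * 3" using a1 a2 by (intro mult_mono) auto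
      finally have "\<bar>(R - t) * ((R + t) / R)\<bar> \<le> \<rho> * 3" .
      then show "((R - t) * ((R + t) / R))^2 \<le> (\<rho> * 3)^2"
        by (metis abs_le_square_iff abs_of_nonneg order_trans abs_ge_zero)
    qed
    finally show ?thesis by (simp add: power_mult_distrib)
  qed
  have "(t * D + E)^2 \<le> 2 * ((t / R^2) * S)^2 + 2 * (((R^2 - t^2) / R^2) * E)^2"
    unfolding key by (rule sq_sum_le)
  also have "\<dots> \<le> 2 * (4 * AL) + 2 * (9 * \<rho>^2 * Dd)" using u v by linarith
  also have "\<dots> \<le> 8 * AL + 18 * (\<rho>^2 * (D^2 + Dd))"
  proof -
    have "\<rho>^2 * Dd \<le> \<rho>^2 * (D^2 + Dd)" by (rule mult_left_mono) auto
    then show ?thesis by simp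
  qed
  finally show ?thesis unfolding E_def AL_def \<rho>_def R_def Dd_def .
qed

lemma gradZsq_cont:
  fixes w :: "('n::{finite,linorder}) stfun"
  assumes w: "C2 w" shows "continuous_on UNIV (gradZsq w)"
proof -
  have c1: "continuous_on UNIV (gradsq w)" by (rule nice_gradsq_cont[OF C2_nice[OF w]])
  have c2: "continuous_on UNIV (\<lambda>p. gradsq (Lb a w) p)" for a by (rule nice_gradsq_cont[OF nice_Lb[OF w]])
  have c3: "continuous_on UNIV (\<lambda>p. case i of (a, b) \<Rightarrow> gradsq (Om a b w) p)" for i
    by (cases i) (simp add: nice_gradsq_cont[OF nice_Om[OF w]])
  show ?thesis
    unfolding gradZsq_def[abs_def]
    by (intro continuous_on_add continuous_on_sum c1 c2 c3)
qed

lemma gZ_ge_w: "gradsq w p \<le> gradZsq (w :: ('n::{finite,linorder}) stfun) p"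
  unfolding gradZsq_def
  by (intro add_increasing2 sum_nonneg) (auto simp: gradsq_nn split: prod.split)

lemma gZ_ge_Lb: "gradsq (Lb a w) p \<le> gradZsq (w :: ('n::{finite,linorder}) stfun) p"
proof -
  have "gradsq (Lb a w) p \<le> (\<Sum>a\<in>UNIV. gradsq (Lb a w) p)"
    by (rule member_le_sum) (auto simp: gradsq_nn)
  moreover have "0 \<le> gradsq w p" by (rule gradsq_nn)
  moreover have "0 \<le> (\<Sum>(a, b)\<in>{(a, b). a < b}. gradsq (Om a b w) p)"
    by (intro sum_nonneg) (auto simp: gradsq_nn split: prod.split)
  ultimately show ?thesis unfolding gradZsq_def by linarith
qed

lemma gZ_ge_Om:
  assumes ab: "a < b"
  shows "gradsq (Om a b w) p \<le> gradZsq (w :: ('n::{finite,linorder}) stfun) p"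
proof -
  have "gradsq (Om a b w) p \<le> (\<Sum>(a, b)\<in>{(a, b). a < b}. gradsq (Om a b w) p)"
    using member_le_sum[of "(a,b)" "{(a, b). a < b}" "\<lambda>(a,b). gradsq (Om a b w) p"] ab
    by (auto simp: gradsq_nn split: prod.split)
  moreover have "0 \<le> gradsq w p" by (rule gradsq_nn)
  moreover have "0 \<le> (\<Sum>a\<in>UNIV. gradsq (Lb a w) p)"
    by (intro sum_nonneg) (auto simp: gradsq_nn)
  ultimately show ?thesis unfolding gradZsq_def by linarith
qed

lemma abs_le_sqrt: "x^2 \<le> g \<Longrightarrow> \<bar>x\<bar> \<le> sqrt g"
  using real_sqrt_le_mono[of "x^2" g] by simp

lemma dt_le: "\<bar>dt w p\<bar> \<le> sqrt (gradsq w p)"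
  by (rule abs_le_sqrt) (simp add: gradsq_def sum_nonneg)

lemma dx_le: "\<bar>dx a w p\<bar> \<le> sqrt (gradsq w p)"
proof (rule abs_le_sqrt)
  have "(dx a w p)^2 \<le> (\<Sum>a\<in>UNIV. (dx a w p)^2)" by (rule member_le_sum) auto
  moreover have "0 \<le> (dt w p)^2" by simp
  ultimately show "(dx a w p)^2 \<le> gradsq w p" unfolding gradsq_def by linarith
qed

lemma norm_t_bound:
  assumes t: "t \<ge> 2" and x: "norm (x::real^'n::finite) \<ge> t - 1"
  shows "norm x + t \<le> (2*t - 1) * (2 + norm x - t)"
proof -
  have "(2*t - 1) * (2 + norm x - t) - (norm x + t) = (2*t - 2) * (norm x - t + 1)"
    by (simp add: algebra_simps)
  moreover have "(2*t - 2) * (norm x - t + 1) \<ge> 0" using t x by simp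
  ultimately show ?thesis by linarith
qed

lemma sq_from_abs: "\<bar>X\<bar> \<le> Y \<Longrightarrow> X^2 \<le> (Y::real)^2"
proof -
  assume a: "\<bar>X\<bar> \<le> Y"
  have "\<bar>X\<bar>^2 \<le> Y^2" by (rule power_mono[OF a]) simp
  then show ?thesis by simp
qed

lemma Lb_FP:
  fixes w :: "('n::{finite,linorder}) stfun"
  assumes t: "t \<ge> 2" and x: "norm x \<ge> t - 1"
  shows "(Lb a w (t,x))^2 \<le> (16 * t^2) * (2 + norm x - t)^2 * gradZsq w (t,x)"
proof -
  define S where "S = sqrt (gradsq w (t,x))"
  define \<rho> where "\<rho> = 2 + norm x - t"
  have S0: "S \<ge> 0" unfolding S_def using gradsq_nn[of w "(t,x)"] by simp
  have \<rho>: "\<rho> \<ge> 1" using x unfolding \<rho>_def by simp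
  have "\<bar>Lb a w (t,x)\<bar> \<le> \<bar>x$a\<bar> * \<bar>dt w (t,x)\<bar> + t * \<bar>dx a w (t,x)\<bar>"
  proof -
    have "Lb a w (t,x) = x$a * dt w (t,x) + t * dx a w (t,x)" by (simp add: Lb_def)
    then have "\<bar>Lb a w (t,x)\<bar> \<le> \<bar>x$a * dt w (t,x)\<bar> + \<bar>t * dx a w (t,x)\<bar>"
      using abs_triangle_ineq by metis
    then show ?thesis using t by (simp add: abs_mult)
  qed
  also have "\<dots> \<le> norm x * S + t * S"
    unfolding S_def using t
    by (intro add_mono mult_mono component_le_norm_cart dt_le dx_le) (auto intro: gradsq_nn)
  also have "\<dots> = (norm x + t) * S" by (simp add: algebra_simps)
  also have "\<dots> \<le> ((2*t - 1) * \<rho>) * S"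
    unfolding \<rho>_def by (rule mult_right_mono[OF norm_t_bound[OF t x] S0])
  finally have "(Lb a w (t,x))^2 \<le> ((2*t - 1) * \<rho> * S)^2" by (rule sq_from_abs)
  also have "\<dots> = (2*t - 1)^2 * \<rho>^2 * gradsq w (t,x)"
    unfolding S_def by (simp add: power_mult_distrib real_sqrt_pow2[OF gradsq_nn])
  also have "\<dots> \<le> (16 * t^2) * \<rho>^2 * gradZsq w (t,x)"
  proof (intro mult_mono gZ_ge_w)
    have "(2*t - 1)^2 \<le> (4*t)^2" by (rule power_mono) (use t in auto)
    then show "(2*t - 1)^2 \<le> 16 * t^2" by (simp add: power_mult_distrib)
  qed (auto simp: gradsq_nn)
  finally show ?thesis unfolding \<rho>_def .
qed

lemma Om_FP:
  fixes w :: "('n::{finite,linorder}) stfun"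
  assumes t: "t \<ge> 2" and x: "norm x \<ge> t - 1"
  shows "(Om a b w (t,x))^2 \<le> (16 * t^2) * (2 + norm x - t)^2 * gradZsq w (t,x)"
proof -
  define S where "S = sqrt (gradsq w (t,x))"
  define \<rho> where "\<rho> = 2 + norm x - t"
  have S0: "S \<ge> 0" unfolding S_def using gradsq_nn[of w "(t,x)"] by simp
  have \<rho>: "\<rho> \<ge> 1" using x unfolding \<rho>_def by simp
  have "\<bar>Om a b w (t,x)\<bar> \<le> \<bar>x$a\<bar> * \<bar>dx b w (t,x)\<bar> + \<bar>x$b\<bar> * \<bar>dx a w (t,x)\<bar>"
  proof -
    have "Om a b w (t,x) = x$a * dx b w (t,x) - x$b * dx a w (t,x)" by (simp add: Om_def)
    then have "\<bar>Om a b w (t,x)\<bar> \<le> \<bar>x$a * dx b w (t,x)\<bar> + \<bar>x$b * dx a w (t,x)\<bar>"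
      using abs_triangle_ineq4 by metis
    then show ?thesis by (simp add: abs_mult)
  qed
  also have "\<dots> \<le> norm x * S + norm x * S"
    unfolding S_def
    by (intro add_mono mult_mono component_le_norm_cart dt_le dx_le) (auto intro: gradsq_nn)
  also have "\<dots> = 2 * norm x * S" by (simp add: algebra_simps)
  also have "\<dots> \<le> 2 * ((2*t - 1) * \<rho>) * S"
  proof -
    have "norm x \<le> (2*t - 1) * \<rho>" using norm_t_bound[OF t x] t unfolding \<rho>_def by linarith
    then show ?thesis using S0 by (intro mult_right_mono) auto
  qed
  finally have "(Om a b w (t,x))^2 \<le> (2 * ((2*t - 1) * \<rho>) * S)^2" by (rule sq_from_abs)
  also have "\<dots> = (4 * (2*t - 1)^2) * \<rho>^2 * gradsq w (t,x)"
    unfolding S_def by (simp add: power_mult_distrib real_sqrt_pow2[OF gradsq_nn])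
  also have "\<dots> \<le> (16 * t^2) * \<rho>^2 * gradZsq w (t,x)"
  proof -
    have "(2*t - 1)^2 \<le> (2*t)^2" by (rule power_mono) (use t in auto)
    then have AB: "4 * (2*t - 1)^2 \<le> 16 * t^2" by (simp add: power_mult_distrib)
    show ?thesis
      by (intro mult_mono[OF mult_right_mono[OF AB]] gZ_ge_w) (auto simp: gradsq_nn)
  qed
  finally show ?thesis unfolding \<rho>_def .
qed

lemma L0_bound:
  fixes w :: "('n::{finite,linorder}) stfun"
  assumes w: "C2 w" and t: "t \<ge> 2" and CH: "CH \<ge> 0"
    and ZL: "\<And>a. wint \<Lambda> t (\<lambda>p. (Lb a w p)^2) \<le> ennreal CH * wint (\<Lambda>+2) t (gradZsq w)"
  shows "wint \<Lambda> t (\<lambda>p. (L0 w p)^2) \<le> ennreal (8 * real CARD('n) * CH + 18) * wint (\<Lambda>+2) t (gradZsq w)"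
proof -
  define \<rho> where "\<rho> x = 2 + norm x - t" for x :: "real^'n::{finite,linorder}"
  define g where "g a x = ennreal (\<rho> x powr \<Lambda> * (Lb a w (t,x))^2) * indicator (Sigma_ex t) x" for a x
  define q where "q x = ennreal (\<rho> x powr (\<Lambda>+2) * gradZsq w (t,x)) * indicator (Sigma_ex t) x" for x
  define W2 where "W2 = wint (\<Lambda>+2) t (gradZsq w)"
  have mLb[measurable]: "(\<lambda>x. Lb a w (t,x)) \<in> borel_measurable borel" for a
    by (intro borel_measurable_continuous_onI slice_cont nice_cont nice_Lb w)
  have mG[measurable]: "(\<lambda>x. gradZsq w (t,x)) \<in> borel_measurable borel"
    by (intro borel_measurable_continuous_onI slice_cont gradZsq_cont w)
  have mg: "g a \<in> borel_measurable lborel" for a unfolding g_def[abs_def] \<rho>_def by measurable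
  have mq: "q \<in> borel_measurable lborel" unfolding q_def[abs_def] \<rho>_def by measurable
  have pw: "ennreal (\<rho> x powr \<Lambda> * (L0 w (t,x))^2) * indicator (Sigma_ex t) x
      \<le> (\<Sum>a\<in>UNIV. ennreal 8 * g a x) + ennreal 18 * q x" for x
  proof (cases "x \<in> Sigma_ex t")
    case False then show ?thesis by simp
  next
    case True
    then have x: "norm x \<ge> t - 1" by (simp add: Sigma_ex_def)
    have r1: "\<rho> x \<ge> 1" using x by (simp add: \<rho>_def)
    define D where "D = dt w (t,x)"
    define d where "d a = dx a w (t,x)" for a
    define W where "W = \<rho> x powr \<Lambda>"
    have W0: "W \<ge> 0" by (simp add: W_def)
    have eL0: "L0 w (t,x) = t * D + (\<Sum>a\<in>UNIV. x$a * d a)" by (simp add: L0_def D_def d_def)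
    have eLb: "Lb a w (t,x) = x$a * D + t * d a" for a by (simp add: Lb_def D_def d_def)
    have egs: "gradsq w (t,x) = D^2 + (\<Sum>a\<in>UNIV. (d a)^2)" by (simp add: gradsq_def D_def d_def)
    have "(L0 w (t,x))^2 \<le> 8 * (\<Sum>a\<in>UNIV. (Lb a w (t,x))^2) + 18 * ((\<rho> x)^2 * gradsq w (t,x))"
      unfolding eL0 eLb egs \<rho>_def by (rule L0_pw[OF t x])
    also have "\<dots> \<le> 8 * (\<Sum>a\<in>UNIV. (Lb a w (t,x))^2) + 18 * ((\<rho> x)^2 * gradZsq w (t,x))"
    proof -
      have "(\<rho> x)^2 * gradsq w (t,x) \<le> (\<rho> x)^2 * gradZsq w (t,x)"
        by (rule mult_left_mono[OF gZ_ge_w]) simp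
      then show ?thesis by linarith
    qed
    finally have b1: "(L0 w (t,x))^2 \<le> 8 * (\<Sum>a\<in>UNIV. (Lb a w (t,x))^2) + 18 * ((\<rho> x)^2 * gradZsq w (t,x))" .
    have "W * (L0 w (t,x))^2 \<le> W * (8 * (\<Sum>a\<in>UNIV. (Lb a w (t,x))^2) + 18 * ((\<rho> x)^2 * gradZsq w (t,x)))"
      by (rule mult_left_mono[OF b1 W0])
    also have "\<dots> = (\<Sum>a\<in>UNIV. 8 * (W * (Lb a w (t,x))^2)) + 18 * (\<rho> x powr (\<Lambda>+2) * gradZsq w (t,x))"
    proof -
      define SL where "SL = (\<Sum>a\<in>UNIV. (Lb a w (t,x))^2)"
      define GZ where "GZ = gradZsq w (t,x)"
      have p2: "\<rho> x powr (\<Lambda>+2) = W * (\<rho> x)^2" using r1 by (simp add: W_def powr_add)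
      have e1: "W * SL = (\<Sum>a\<in>UNIV. W * (Lb a w (t,x))^2)" unfolding SL_def by (rule sum_distrib_left)
      have e2: "8 * (\<Sum>a\<in>UNIV. W * (Lb a w (t,x))^2) = (\<Sum>a\<in>UNIV. 8 * (W * (Lb a w (t,x))^2))" by (rule sum_distrib_left)
      have "W * (8 * SL + 18 * ((\<rho> x)^2 * GZ)) = 8 * (W * SL) + 18 * ((W * (\<rho> x)^2) * GZ)"
        by (simp only: distrib_left mult.assoc mult.left_commute)
      then show ?thesis unfolding SL_def[symmetric] GZ_def[symmetric] p2 e1 e2 .
    qed
    finally have b2: "W * (L0 w (t,x))^2 \<le> (\<Sum>a\<in>UNIV. 8 * (W * (Lb a w (t,x))^2)) + 18 * (\<rho> x powr (\<Lambda>+2) * gradZsq w (t,x))" .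
    have nn1: "0 \<le> 8 * (W * (Lb a w (t,x))^2)" for a using W0 by simp
    have nn2: "0 \<le> 18 * (\<rho> x powr (\<Lambda>+2) * gradZsq w (t,x))"
      using gZ_ge_w[of w "(t,x)"] gradsq_nn[of w "(t,x)"] by simp
    have "(\<Sum>a\<in>UNIV. ennreal 8 * g a x) + ennreal 18 * q x
        = (\<Sum>a\<in>UNIV. ennreal (8 * (W * (Lb a w (t,x))^2))) + ennreal (18 * (\<rho> x powr (\<Lambda>+2) * gradZsq w (t,x)))"
    proof -
      have t1: "ennreal 8 * g a x = ennreal (8 * (W * (Lb a w (t,x))^2))" for a
      proof -
        have "g a x = ennreal (W * (Lb a w (t,x))^2)" using True by (simp add: g_def W_def)
        then show ?thesis using ennreal_mult[of 8 "W * (Lb a w (t,x))^2"] W0 by simp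
      qed
      have t2: "ennreal 18 * q x = ennreal (18 * (\<rho> x powr (\<Lambda>+2) * gradZsq w (t,x)))"
      proof -
        have "q x = ennreal (\<rho> x powr (\<Lambda>+2) * gradZsq w (t,x))" using True by (simp add: q_def)
        then show ?thesis using ennreal_mult[of 18 "\<rho> x powr (\<Lambda>+2) * gradZsq w (t,x)"] nn2 by simp
      qed
      show ?thesis unfolding t1 t2 ..
    qed
    also have "\<dots> = ennreal ((\<Sum>a\<in>UNIV. 8 * (W * (Lb a w (t,x))^2)) + 18 * (\<rho> x powr (\<Lambda>+2) * gradZsq w (t,x)))"
    proof -
      have "(\<Sum>a\<in>UNIV. ennreal (8 * (W * (Lb a w (t,x))^2))) = ennreal (\<Sum>a\<in>UNIV. 8 * (W * (Lb a w (t,x))^2))"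
        by (rule sum_ennreal) (rule nn1)
      moreover have "ennreal (\<Sum>a\<in>UNIV. 8 * (W * (Lb a w (t,x))^2)) + ennreal (18 * (\<rho> x powr (\<Lambda>+2) * gradZsq w (t,x)))
          = ennreal ((\<Sum>a\<in>UNIV. 8 * (W * (Lb a w (t,x))^2)) + 18 * (\<rho> x powr (\<Lambda>+2) * gradZsq w (t,x)))"
        by (rule ennreal_plus[symmetric]) (use nn1 nn2 in \<open>auto intro: sum_nonneg\<close>)
      ultimately show ?thesis by simp
    qed
    finally have "(\<Sum>a\<in>UNIV. ennreal 8 * g a x) + ennreal 18 * q x = ennreal ((\<Sum>a\<in>UNIV. 8 * (W * (Lb a w (t,x))^2)) + 18 * (\<rho> x powr (\<Lambda>+2) * gradZsq w (t,x)))" .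
    moreover have "ennreal (\<rho> x powr \<Lambda> * (L0 w (t,x))^2) * indicator (Sigma_ex t) x = ennreal (W * (L0 w (t,x))^2)"
      using True by (simp add: W_def)
    ultimately show ?thesis using b2 by (simp only: ennreal_leI)
  qed
  have "wint \<Lambda> t (\<lambda>p. (L0 w p)^2) = (\<integral>\<^sup>+x. ennreal (\<rho> x powr \<Lambda> * (L0 w (t,x))^2) * indicator (Sigma_ex t) x \<partial>lborel)"
    unfolding wint_def \<rho>_def by simp
  also have "\<dots> \<le> (\<integral>\<^sup>+x. (\<Sum>a\<in>UNIV. ennreal 8 * g a x) + ennreal 18 * q x \<partial>lborel)"
    by (rule nn_integral_mono) (rule pw)
  also have "\<dots> = (\<Sum>a\<in>UNIV. ennreal 8 * (\<integral>\<^sup>+x. g a x \<partial>lborel)) + ennreal 18 * (\<integral>\<^sup>+x. q x \<partial>lborel)"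
    using mg mq by (simp add: nn_integral_add nn_integral_sum nn_integral_cmult)
  also have "(\<integral>\<^sup>+x. q x \<partial>lborel) = W2" unfolding q_def W2_def wint_def \<rho>_def by simp
  also have gi: "(\<Sum>a\<in>UNIV. ennreal 8 * (\<integral>\<^sup>+x. g a x \<partial>lborel)) = (\<Sum>a\<in>UNIV. ennreal 8 * wint \<Lambda> t (\<lambda>p. (Lb a w p)^2))"
    unfolding g_def wint_def \<rho>_def by simp
  also have "(\<Sum>a\<in>UNIV. ennreal 8 * wint \<Lambda> t (\<lambda>p. (Lb a w p)^2)) \<le> (\<Sum>a\<in>(UNIV::'n set). ennreal 8 * (ennreal CH * W2))"
    by (intro sum_mono mult_left_mono ZL[unfolded W2_def[symmetric]]) auto
  also have "(\<Sum>a\<in>(UNIV::'n set). ennreal 8 * (ennreal CH * W2)) = ennreal (real CARD('n) * 8 * CH) * W2"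
    using CH by (simp add: ennreal_of_nat_eq_real_of_nat ennreal_mult mult.assoc)
  finally have "wint \<Lambda> t (\<lambda>p. (L0 w p)^2) \<le> ennreal (real CARD('n) * 8 * CH) * W2 + ennreal 18 * W2"
    by (simp add: add_right_mono)
  also have "\<dots> = ennreal (8 * real CARD('n) * CH + 18) * W2"
  proof -
    have "ennreal (8 * real CARD('n) * CH + 18) = ennreal (real CARD('n) * 8 * CH) + ennreal 18"
      using CH by (subst ennreal_plus[symmetric]) (auto simp: mult_ac)
    then show ?thesis by (simp only: distrib_right)
  qed
  finally show ?thesis unfolding W2_def .
qed

theorem lemma2p12:
  fixes \<Lambda> :: real
  assumes "CARD('n::{finite,linorder}) = 2 \<or> CARD('n) = 3"
    and "\<Lambda> > -1"
  shows "\<exists>C::real. C > 0 \<and>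
    (\<forall>(w :: 'n stfun) (t :: real). C2 w \<and> t \<ge> 2 \<longrightarrow>
       (\<forall>a. wint \<Lambda> t (\<lambda>p. (Lb a w p)\<^sup>2) \<le> ennreal C * wint (\<Lambda> + 2) t (gradZsq w))
     \<and> (\<forall>a b. a < b \<longrightarrow> wint \<Lambda> t (\<lambda>p. (Om a b w p)\<^sup>2) \<le> ennreal C * wint (\<Lambda> + 2) t (gradZsq w))
     \<and> wint \<Lambda> t (\<lambda>p. (L0 w p)\<^sup>2) \<le> ennreal C * wint (\<Lambda> + 2) t (gradZsq w))"
proof -
  note L = assms(2)
  define CH where "CH = 4/(\<Lambda>+1)^2"
  define C where "C = 8 * real CARD('n) * CH + 18"
  have CH0: "CH \<ge> 0" unfolding CH_def by simp
  have C0: "C > 0"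
  proof -
    have "0 \<le> 8 * real CARD('n) * CH" using CH0 by simp
    then show ?thesis unfolding C_def by linarith
  qed
  have CHC: "CH \<le> C"
  proof -
    have "1 \<le> real CARD('n)" by simp
    then have "CH \<le> real CARD('n) * CH" using CH0 by (simp add: mult_le_cancel_right1)
    moreover have "8 * real CARD('n) * CH = 8 * (real CARD('n) * CH)" by simp
    ultimately show ?thesis unfolding C_def using CH0 by linarith
  qed
  have main: "(\<forall>a. wint \<Lambda> t (\<lambda>p. (Lb a w p)\<^sup>2) \<le> ennreal C * wint (\<Lambda> + 2) t (gradZsq w))
     \<and> (\<forall>a b. a < b \<longrightarrow> wint \<Lambda> t (\<lambda>p. (Om a b w p)\<^sup>2) \<le> ennreal C * wint (\<Lambda> + 2) t (gradZsq w))
     \<and> wint \<Lambda> t (\<lambda>p. (L0 w p)\<^sup>2) \<le> ennreal C * wint (\<Lambda> + 2) t (gradZsq w)"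
    if w: "C2 w" and t: "t \<ge> 2" for w :: "'n stfun" and t
  proof -
    have K: "16 * t^2 \<ge> 0" by simp
    have mono: "ennreal CH * X \<le> ennreal C * X" for X
      by (rule mult_right_mono) (auto intro: ennreal_leI CHC)
    have ZL: "wint \<Lambda> t (\<lambda>p. (Lb a w p)\<^sup>2) \<le> ennreal CH * wint (\<Lambda> + 2) t (gradZsq w)" for a
      unfolding CH_def
      by (rule Z_bound[OF L t K nice_Lb[OF w] gradZsq_cont[OF w] gZ_ge_Lb Lb_FP[OF t]])
    have ZO: "wint \<Lambda> t (\<lambda>p. (Om a b w p)\<^sup>2) \<le> ennreal CH * wint (\<Lambda> + 2) t (gradZsq w)" if ab: "a < b" for a b
      unfolding CH_def
      by (rule Z_bound[OF L t K nice_Om[OF w] gradZsq_cont[OF w] gZ_ge_Om[OF ab] Om_FP[OF t]])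
    have Z0: "wint \<Lambda> t (\<lambda>p. (L0 w p)\<^sup>2) \<le> ennreal C * wint (\<Lambda> + 2) t (gradZsq w)"
      unfolding C_def by (rule L0_bound[OF w t CH0 ZL])
    show ?thesis using ZL ZO Z0 mono order_trans by blast
  qed
  show ?thesis using C0 main by blast
qed


end
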